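(* Let $\Gamma$ be a lattice satisfying the standing assumptions below and let $\tilde\Gamma$ be its augmented lattice. A set of faces $\mathcal{E}\subseteq C_2(\Gamma)$ is a cut set in $\tilde\Gamma$ if and only if there exists a nontrivial $X$-type operator, supported in $\mathcal{E}$, which is a stabilizer or a logical operator of the 3D toric code on $\Gamma$.
   Context: $\Gamma$ is a finite, connected three-dimensional cell complex with edges $C_1(\Gamma)$ (partial edges allowed at the boundary), faces $C_2(\Gamma)$, volumes $C_3(\Gamma)$; $\partial(\nu)$ denotes the boundary faces of a volume, $\iota(e)$ the faces containing edge $e$ in their boundary, $\iota(f)$ the volumes having face $f$ in their boundary. Every face lies in the boundary of at most two volumes. Standing assumptions: (L1) $\Gamma$ has no boundaries in its interior; (L2) the boundary of every face of $\Gamma$ and of its dual $\Gamma^*$ is a closed path or an open path beginning and ending with partial edges; the dual complex is connected. The 3D toric code on $\Gamma$ has one qubit per face and stabilizer group generated by $B_e=\prod_{f\in\iota(e)}Z_f$ ($e\in C_1(\Gamma)$) and $A_\nu=\prod_{f\in\partial(\nu)}X_f$ ($\nu\in C_3(\Gamma)$); a logical operator is a Pauli operator commuting with all stabilizers but not in the stabilizer group (up to phase). A face path is a sequence of faces $\rho=(f_1,\dots,f_m)$ with pairwise distinct volumes $\Lambda(\rho)=(\nu_1,\dots,\nu_{m-1})$ such that $f_i,f_{i+1}\in\partial(\nu_i)$. Let $\mathcal{F}=\{f:|\iota(f)|=1\}$. Faces $f,f'\in\mathcal{F}$ are face-equivalent if some face path from $f$ to $f'$ gives a stabilizer $\prod_{g\in\rho}Z_g$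 (each face equivalent to itself); as in the paper this is an equivalence relation with classes $\mathcal{F}_1,\dots,\mathcal{F}_K$. The augmented lattice $\tilde\Gamma$ has the same faces as $\Gamma$ and the volumes of $\Gamma$ together with new volumes $\bar\nu_1,\dots,\bar\nu_K$ with $\partial(\bar\nu_i)=\mathcal{F}_i$. In a complex $\Delta$ (either $\Gamma$ or $\tilde\Gamma$, with face paths taken in $\Delta$), a set of faces $K$ is a cut set if there exist volumes $\nu,\nu'$ of $\Delta$ such that every face path $\rho=(f_1,\dots,f_m)$ in $\Delta$ with $f_1\in\partial(\nu)$, $f_m\in\partial(\nu')$ and $\nu,\nu'\notin\Lambda(\rho)$ satisfies $K\cap\rho\neq\emptyset$. *)

theory Defs
  imports Main
begin

text \<open>
  A three-dimensional cell complex Gamma is given combinatorially by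
  vertices Vt, edges Ed, faces Fc, volumes Vol, the endpoint map ends
  (an edge with a single endpoint is a partial edge), the map ebd giving the
  edges in the boundary of a face, and the map fbd giving the faces in the
  boundary of a volume.
\<close>

definition iota_e :: "'f set \<Rightarrow> ('f \<Rightarrow> 'e set) \<Rightarrow> 'e \<Rightarrow> 'f set" where
  "iota_e Fc ebd e = {f \<in> Fc. e \<in> ebd f}"

definition iota_f :: "'v set \<Rightarrow> ('v \<Rightarrow> 'f set) \<Rightarrow> 'f \<Rightarrow> 'v set" where
  "iota_f Vol fbd f = {v \<in> Vol. f \<in> fbd v}"

definition bdry_faces :: "'f set \<Rightarrow> 'v set \<Rightarrow> ('v \<Rightarrow> 'f set) \<Rightarrow> 'f set" where
  "bdry_faces Fc Vol fbd = {f \<in> Fc. card (iota_f Vol fbd f) = 1}"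

definition closed_path :: "('a \<Rightarrow> 'b set) \<Rightarrow> 'a set \<Rightarrow> bool" where
  "closed_path ends A \<longleftrightarrow> (\<exists>es xs. distinct es \<and> set es = A \<and> distinct xs \<and>
      length es = length xs \<and> length es \<ge> 2 \<and>
      (\<forall>i < length es. ends (es ! i) = {xs ! i, xs ! (Suc i mod length es)}))"

definition open_path :: "('a \<Rightarrow> 'b set) \<Rightarrow> 'a set \<Rightarrow> bool" where
  "open_path ends A \<longleftrightarrow> (\<exists>es xs. distinct es \<and> set es = A \<and> distinct xs \<and>
      xs \<noteq> [] \<and> length es = Suc (length xs) \<and>
      ends (es ! 0) = {xs ! 0} \<and> ends (last es) = {last xs} \<and>
      (\<forall>i. 0 < i \<and> i < length xs \<longrightarrow> ends (es ! i) = {xs ! (i - 1), xs ! i}))"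

definition path_bdry :: "('a \<Rightarrow> 'b set) \<Rightarrow> 'a set \<Rightarrow> bool" where
  "path_bdry ends A \<longleftrightarrow> closed_path ends A \<or> open_path ends A"

section \<open>Pauli operators up to phase (binary symplectic representation)\<close>

type_synonym 'f pauli = "'f set \<times> 'f set"  \<comment> \<open>(X-support, Z-support)\<close>

definition psum :: "'f pauli \<Rightarrow> 'f pauli \<Rightarrow> 'f pauli" where
  "psum p q = ((fst p - fst q) \<union> (fst q - fst p), (snd p - snd q) \<union> (snd q - snd p))"

definition commutes :: "'f pauli \<Rightarrow> 'f pauli \<Rightarrow> bool" where
  "commutes p q \<longleftrightarrow> even (card (fst p \<inter> snd q) + card (snd p \<inter> fst q))"

inductive_set gen_group :: "'f pauli set \<Rightarrow> 'f pauli set" for G where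
  one: "({}, {}) \<in> gen_group G"
| mult: "p \<in> gen_group G \<Longrightarrow> g \<in> G \<Longrightarrow> psum p g \<in> gen_group G"

text \<open>Stabilizer generators of the 3D toric code: B_e = Z on iota(e), A_v = X on the
  boundary of v.\<close>
definition tc_gens :: "'e set \<Rightarrow> 'f set \<Rightarrow> 'v set \<Rightarrow> ('f \<Rightarrow> 'e set) \<Rightarrow> ('v \<Rightarrow> 'f set)
    \<Rightarrow> 'f pauli set" where
  "tc_gens Ed Fc Vol ebd fbd =
     {({}, iota_e Fc ebd e) | e. e \<in> Ed} \<union> {(fbd v, {}) | v. v \<in> Vol}"

definition tc_stab :: "'e set \<Rightarrow> 'f set \<Rightarrow> 'v set \<Rightarrow> ('f \<Rightarrow> 'e set) \<Rightarrow> ('v \<Rightarrow> 'f set)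
    \<Rightarrow> 'f pauli set" where
  "tc_stab Ed Fc Vol ebd fbd = gen_group (tc_gens Ed Fc Vol ebd fbd)"

definition tc_logical :: "'e set \<Rightarrow> 'f set \<Rightarrow> 'v set \<Rightarrow> ('f \<Rightarrow> 'e set) \<Rightarrow> ('v \<Rightarrow> 'f set)
    \<Rightarrow> 'f pauli \<Rightarrow> bool" where
  "tc_logical Ed Fc Vol ebd fbd p \<longleftrightarrow>
     fst p \<subseteq> Fc \<and> snd p \<subseteq> Fc \<and>
     (\<forall>s \<in> tc_stab Ed Fc Vol ebd fbd. commutes p s) \<and>
     p \<notin> tc_stab Ed Fc Vol ebd fbd"

definition face_path :: "'f set \<Rightarrow> 'w set \<Rightarrow> ('w \<Rightarrow> 'f set) \<Rightarrow> 'f list \<Rightarrow> 'w list \<Rightarrow> bool" where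
  "face_path Fc W bd fs vs \<longleftrightarrow> fs \<noteq> [] \<and> length vs = length fs - 1 \<and> distinct vs \<and>
     set vs \<subseteq> W \<and> set fs \<subseteq> Fc \<and>
     (\<forall>i < length vs. fs ! i \<in> bd (vs ! i) \<and> fs ! Suc i \<in> bd (vs ! i))"

definition face_equiv :: "'e set \<Rightarrow> 'f set \<Rightarrow> 'v set \<Rightarrow> ('f \<Rightarrow> 'e set) \<Rightarrow> ('v \<Rightarrow> 'f set)
    \<Rightarrow> 'f \<Rightarrow> 'f \<Rightarrow> bool" where
  "face_equiv Ed Fc Vol ebd fbd f f' \<longleftrightarrow>
     f \<in> bdry_faces Fc Vol fbd \<and> f' \<in> bdry_faces Fc Vol fbd \<and>
     (f = f' \<or> (\<exists>fs vs. face_path Fc Vol fbd fs vs \<and> hd fs = f \<and> last fs = f' \<and>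
                   ({}, set fs) \<in> tc_stab Ed Fc Vol ebd fbd))"

text \<open>Equivalence classes F_1..F_K (of the equivalence relation generated by
  face-equivalence, which coincides with it since it is an equivalence relation).\<close>
definition face_classes :: "'e set \<Rightarrow> 'f set \<Rightarrow> 'v set \<Rightarrow> ('f \<Rightarrow> 'e set) \<Rightarrow> ('v \<Rightarrow> 'f set)
    \<Rightarrow> 'f set set" where
  "face_classes Ed Fc Vol ebd fbd =
     bdry_faces Fc Vol fbd //
       ({(a, b). face_equiv Ed Fc Vol ebd fbd a b \<or> face_equiv Ed Fc Vol ebd fbd b a})\<^sup>*"

text \<open>Augmented lattice: old volumes Inl v, new volumes Inr C for each class C.\<close>
definition aug_vols :: "'e set \<Rightarrow> 'f set \<Rightarrow> 'v set \<Rightarrow> ('f \<Rightarrow> 'e set) \<Rightarrow> ('v \<Rightarrow> 'f set)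
    \<Rightarrow> ('v + 'f set) set" where
  "aug_vols Ed Fc Vol ebd fbd = Inl ` Vol \<union> Inr ` face_classes Ed Fc Vol ebd fbd"

definition aug_bd :: "('v \<Rightarrow> 'f set) \<Rightarrow> 'v + 'f set \<Rightarrow> 'f set" where
  "aug_bd fbd w = (case w of Inl v \<Rightarrow> fbd v | Inr C \<Rightarrow> C)"

definition cut_set :: "'f set \<Rightarrow> 'w set \<Rightarrow> ('w \<Rightarrow> 'f set) \<Rightarrow> 'f set \<Rightarrow> bool" where
  "cut_set Fc W bd K \<longleftrightarrow> (\<exists>v \<in> W. \<exists>v' \<in> W. \<forall>fs vs.
      face_path Fc W bd fs vs \<and> hd fs \<in> bd v \<and> last fs \<in> bd v' \<and>
      v \<notin> set vs \<and> v' \<notin> set vs \<longrightarrow> K \<inter> set fs \<noteq> {})"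

text \<open>(L1) No boundaries in the interior, rendered homologically: every closed dual
  1-cycle avoiding the boundary faces (a set of non-boundary faces meeting every
  volume boundary in an even number of faces) is a product of the B_e,
  i.e. there are no interior holes.\<close>
definition no_interior_bdry :: "'e set \<Rightarrow> 'f set \<Rightarrow> 'v set \<Rightarrow> ('f \<Rightarrow> 'e set) \<Rightarrow> ('v \<Rightarrow> 'f set)
    \<Rightarrow> bool" where
  "no_interior_bdry Ed Fc Vol ebd fbd \<longleftrightarrow>
     (\<forall>z. z \<subseteq> Fc \<and> z \<inter> bdry_faces Fc Vol fbd = {} \<and>
          (\<forall>v \<in> Vol. even (card (z \<inter> fbd v))) \<longrightarrow>
          ({}, z) \<in> tc_stab Ed Fc Vol ebd fbd)"

definition lattice :: "'x set \<Rightarrow> 'e set \<Rightarrow> 'f set \<Rightarrow> 'v set \<Rightarrow> ('e \<Rightarrow> 'x set)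
    \<Rightarrow> ('f \<Rightarrow> 'e set) \<Rightarrow> ('v \<Rightarrow> 'f set) \<Rightarrow> bool" where
  "lattice Vt Ed Fc Vol ends ebd fbd \<longleftrightarrow>
     finite Vt \<and> finite Ed \<and> finite Fc \<and> finite Vol \<and>
     (\<forall>e \<in> Ed. ends e \<subseteq> Vt \<and> (card (ends e) = 1 \<or> card (ends e) = 2)) \<and>
     (\<forall>f \<in> Fc. ebd f \<subseteq> Ed) \<and>
     (\<forall>v \<in> Vol. fbd v \<subseteq> Fc \<and> fbd v \<noteq> {}) \<and>
     (\<forall>f \<in> Fc. card (iota_f Vol fbd f) \<le> 2) \<and>
     \<comment> \<open>Gamma connected\<close>
     Vt \<noteq> {} \<and>
     (\<forall>x \<in> Vt. \<forall>y \<in> Vt. (x, y) \<in> {(a, b). \<exists>e \<in> Ed. a \<in> ends e \<and> b \<in> ends e}\<^sup>*) \<and>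
     \<comment> \<open>dual complex connected\<close>
     Vol \<noteq> {} \<and>
     (\<forall>v \<in> Vol. \<forall>v' \<in> Vol.
        (v, v') \<in> {(a, b). a \<in> Vol \<and> b \<in> Vol \<and> fbd a \<inter> fbd b \<noteq> {}}\<^sup>*) \<and>
     \<comment> \<open>(L2) for Gamma and for the dual complex\<close>
     (\<forall>f \<in> Fc. path_bdry ends (ebd f)) \<and>
     (\<forall>e \<in> Ed. path_bdry (iota_f Vol fbd) (iota_e Fc ebd e)) \<and>
     \<comment> \<open>(L1)\<close>
     no_interior_bdry Ed Fc Vol ebd fbd"

end

theory Submission
  imports Defs
begin

definition sdiff :: "'a set \<Rightarrow> 'a set \<Rightarrow> 'a set" where "sdiff A B = (A - B) \<union> (B - A)"

lemma psum_sdiff: "psum p q = (sdiff (fst p) (fst q), sdiff (snd p) (snd q))"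
  by (simp add: psum_def sdiff_def)

lemma par_arith: "(a::nat) + b = c + 2*d \<Longrightarrow> even c \<longleftrightarrow> (even a \<longleftrightarrow> even b)"
  by presburger

lemma par_sdiff:
  assumes "finite C"
  shows "even (card (C \<inter> sdiff A B)) \<longleftrightarrow> (even (card (C \<inter> A)) \<longleftrightarrow> even (card (C \<inter> B)))"
proof -
  have f: "finite (C \<inter> A)" "finite (C \<inter> B)" "finite (C \<inter> sdiff A B)" "finite (C \<inter> A \<inter> B)"
    using assms by auto
  have 1: "card (C\<inter>A) + card (C\<inter>B) = card ((C\<inter>A) \<union> (C\<inter>B)) + card ((C\<inter>A) \<inter> (C\<inter>B))"
    using card_Un_Int f by blast
  have e: "(C\<inter>A) \<union> (C\<inter>B) = (C \<inter> sdiff A B) \<union> (C\<inter>A\<inter>B)" by (auto simp: sdiff_def)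
  have d: "(C \<inter> sdiff A B) \<inter> (C\<inter>A\<inter>B) = {}" by (auto simp: sdiff_def)
  have 2: "card ((C\<inter>A) \<union> (C\<inter>B)) = card (C \<inter> sdiff A B) + card (C\<inter>A\<inter>B)"
    unfolding e using card_Un_disjoint[OF f(3) f(4) d] .
  have 3: "(C\<inter>A) \<inter> (C\<inter>B) = C\<inter>A\<inter>B" by auto
  have 4: "card (C\<inter>A) + card (C\<inter>B) = card (C \<inter> sdiff A B) + 2 * card (C\<inter>A\<inter>B)"
    using 1 2 3 by simp
  show ?thesis using par_arith[OF 4] .
qed

lemma par_sdiff2:
  assumes "finite A" "finite B"
  shows "even (card (sdiff A B \<inter> C)) \<longleftrightarrow> (even (card (A \<inter> C)) \<longleftrightarrow> even (card (B \<inter> C)))"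
proof -
  have "finite ((A \<union> B) \<inter> C)" using assms by auto
  from par_sdiff[OF this, of A B]
  have "even (card ((A \<union> B) \<inter> C \<inter> sdiff A B)) \<longleftrightarrow> (even (card ((A \<union> B) \<inter> C \<inter> A)) \<longleftrightarrow> even (card ((A \<union> B) \<inter> C \<inter> B)))" .
  moreover have "(A \<union> B) \<inter> C \<inter> sdiff A B = sdiff A B \<inter> C" "(A \<union> B) \<inter> C \<inter> A = A \<inter> C" "(A \<union> B) \<inter> C \<inter> B = B \<inter> C"
    by (auto simp: sdiff_def)
  ultimately show ?thesis by simp
qed

lemma telescope:
  fixes Q :: "nat \<Rightarrow> bool"
  shows "even (card {i. i < m \<and> Q i \<noteq> Q (Suc i)}) \<longleftrightarrow> (Q 0 = Q m)"
proof (induction m)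
  case 0
  then show ?case by simp
next
  case (Suc m)
  have e: "{i. i < Suc m \<and> Q i \<noteq> Q (Suc i)} = {i. i < m \<and> Q i \<noteq> Q (Suc i)} \<union> (if Q m \<noteq> Q (Suc m) then {m} else {})"
    by (auto simp: less_Suc_eq)
  show ?case
  proof (cases "Q m \<noteq> Q (Suc m)")
    case True
    then have "card {i. i < Suc m \<and> Q i \<noteq> Q (Suc i)} = Suc (card {i. i < m \<and> Q i \<noteq> Q (Suc i)})"
      unfolding e by simp
    then have c: "even (card {i. i < Suc m \<and> Q i \<noteq> Q (Suc i)}) \<longleftrightarrow> \<not> even (card {i. i < m \<and> Q i \<noteq> Q (Suc i)})"
      by simp
    have q: "Q (Suc m) = (\<not> Q m)" using True by auto
    show ?thesis unfolding c Suc.IH q by (cases "Q 0"; cases "Q m") simp_all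
  next
    case False
    then show ?thesis using Suc e by auto
  qed
qed

lemma rtrancl_cross:
  assumes "(x, y) \<in> r\<^sup>*" "x \<in> P" "y \<notin> P"
  shows "\<exists>a b. (a, b) \<in> r \<and> a \<in> P \<and> b \<notin> P"
  using assms
proof (induction rule: rtrancl_induct)
  case base then show ?case by simp
next
  case (step y z)
  then show ?case by blast
qed

definition chain :: "'a list \<Rightarrow> 'a set" where
  "chain L = {x. odd (length (filter ((=) x) L))}"

lemma chain_Cons: "chain (x # L) = sdiff (chain L) {x}"
  by (rule set_eqI) (simp add: chain_def sdiff_def)

lemma chain_sub: "chain L \<subseteq> set L"
proof
  fix x assume x: "x \<in> chain L"
  show "x \<in> set L"
  proof (rule ccontr)
    assume "x \<notin> set L"
    then have "filter ((=) x) L = []" by (auto simp: filter_empty_conv)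
    then show False using x by (simp add: chain_def)
  qed
qed

lemma chain_par: "even (card (chain L \<inter> C)) \<longleftrightarrow> even (length (filter (\<lambda>x. x \<in> C) L))"
proof (induction L)
  case Nil
  then show ?case by (simp add: chain_def)
next
  case (Cons x L)
  have "finite (chain L)" by (rule finite_subset[OF chain_sub]) simp
  then have "even (card (chain (x#L) \<inter> C)) \<longleftrightarrow> (even (card (chain L \<inter> C)) \<longleftrightarrow> even (card ({x} \<inter> C)))"
    unfolding chain_Cons by (rule par_sdiff2) simp_all
  then have h: "even (card (chain (x#L) \<inter> C)) \<longleftrightarrow> (even (length (filter (\<lambda>x. x \<in> C) L)) \<longleftrightarrow> even (card ({x} \<inter> C)))"
    unfolding Cons.IH .
  show ?case
  proof (cases "x \<in> C")
    case True
    then have "card ({x} \<inter> C) = 1" by simp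
    then show ?thesis unfolding h using True by simp
  next
    case False
    then have "card ({x} \<inter> C) = 0" by simp
    then show ?thesis unfolding h using False by simp
  qed
qed

lemma inj_nth_card:
  assumes "distinct es"
  shows "card {g \<in> set es. P g} = card {i. i < length es \<and> P (es ! i)}"
proof -
  have "{g \<in> set es. P g} = (!) es ` {i. i < length es \<and> P (es ! i)}"
    by (auto simp: in_set_conv_nth)
  moreover have "inj_on ((!) es) {i. i < length es \<and> P (es ! i)}"
    using assms by (auto simp: inj_on_def nth_eq_iff_index_eq)
  ultimately show ?thesis by (simp add: card_image)
qed

lemma mod_pred:
  assumes "i < n" "j < n"
  shows "(j = Suc i mod n) \<longleftrightarrow> (i = (if j = 0 then n - 1 else j - 1))"
proof (cases "Suc i < n")
  case True
  then show ?thesis using assms by auto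
next
  case False
  then have "Suc i = n" using assms by auto
  then show ?thesis using assms by auto
qed

lemma closed_path_even:
  assumes "closed_path ends A"
  shows "even (card {g \<in> A. x \<in> ends g})"
proof -
  obtain es xs where d: "distinct es" "set es = A" "distinct xs" "length es = length xs"
    "length es \<ge> 2" and H: "\<forall>i < length es. ends (es ! i) = {xs ! i, xs ! (Suc i mod length es)}"
    using assms unfolding closed_path_def by blast
  define n where "n = length es"
  have n0: "0 < n" using d(5) unfolding n_def by linarith
  have c: "card {g \<in> A. x \<in> ends g} = card {i. i < n \<and> x \<in> ends (es ! i)}"
    using inj_nth_card[OF d(1)] d(2) n_def by simp
  show ?thesis
  proof (cases "x \<in> set xs")
    case False
    have K: "{i. i < n \<and> x \<in> ends (es ! i)} = {}"
    proof -
      { fix i assume i: "i < n" "x \<in> ends (es ! i)"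
        have "Suc i mod n < n" using n0 by simp
        then have "x \<in> set xs" using i H d(4) n_def by (auto simp: nth_mem) }
      then show ?thesis using False by blast
    qed
    show ?thesis unfolding c K by simp
  next
    case True
    then obtain j where j: "j < n" "x = xs ! j" using d(4) n_def by (auto simp: in_set_conv_nth)
    define j' where "j' = (if j = 0 then n - 1 else j - 1)"
    have K: "{i. i < n \<and> x \<in> ends (es ! i)} = {j, j'}"
    proof (intro set_eqI iffI)
      fix i assume "i \<in> {i. i < n \<and> x \<in> ends (es ! i)}"
      then have i: "i < n" "x \<in> {xs ! i, xs ! (Suc i mod n)}" using H n_def by auto
      have sm: "Suc i mod n < n" using n0 by simp
      from i(2) have "j = i \<or> j = Suc i mod n"
        using j i(1) sm d(3,4) n_def by (auto simp: nth_eq_iff_index_eq)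
      then show "i \<in> {j, j'}" using mod_pred[OF i(1) j(1)] j'_def by auto
    next
      fix i assume "i \<in> {j, j'}"
      then have "i = j \<or> i = j'" by auto
      moreover have "j' < n" using j'_def j d(5) n_def by auto
      moreover have "j = Suc j' mod n" using mod_pred[OF \<open>j' < n\<close> j(1)] j'_def by simp
      ultimately show "i \<in> {i. i < n \<and> x \<in> ends (es ! i)}" using H n_def j by auto
    qed
    have neq: "j \<noteq> j'" using j'_def d(5) n_def j by auto
    show ?thesis unfolding c K using neq by simp
  qed
qed

lemma open_path_even:
  assumes "open_path ends A"
  shows "even (card {g \<in> A. x \<in> ends g})"
proof -
  obtain es xs where d: "distinct es" "set es = A" "distinct xs" "xs \<noteq> []"
    "length es = Suc (length xs)" and H0: "ends (es ! 0) = {xs ! 0}" and HL: "ends (last es) = {last xs}"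
    and H: "\<forall>i. 0 < i \<and> i < length xs \<longrightarrow> ends (es ! i) = {xs ! (i - 1), xs ! i}"
    using assms unfolding open_path_def by blast
  define n where "n = length xs"
  have n0: "n > 0" using d(4) n_def by auto
  have "es \<noteq> []" using d(5) by auto
  then have lastes: "last es = es ! n" using d(5) n_def by (simp add: last_conv_nth)
  have lastxs: "last xs = xs ! (n - 1)" using d(4) n_def by (simp add: last_conv_nth)
  have E: "\<And>i. i \<le> n \<Longrightarrow> x \<in> ends (es ! i) \<longleftrightarrow> ((i < n \<and> x = xs ! i) \<or> (0 < i \<and> x = xs ! (i - 1)))"
  proof -
    fix i assume i: "i \<le> n"
    show "x \<in> ends (es ! i) \<longleftrightarrow> ((i < n \<and> x = xs ! i) \<or> (0 < i \<and> x = xs ! (i - 1)))"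
    proof (cases "i = 0")
      case True then show ?thesis using H0 n0 by auto
    next
      case False
      show ?thesis
      proof (cases "i = n")
        case True then show ?thesis using HL lastes lastxs False by auto
      next
        case False2: False
        then show ?thesis using H False i n_def by auto
      qed
    qed
  qed
  have c: "card {g \<in> A. x \<in> ends g} = card {i. i < Suc n \<and> x \<in> ends (es ! i)}"
    using inj_nth_card[OF d(1)] d(2,5) n_def by simp
  show ?thesis
  proof (cases "x \<in> set xs")
    case False
    have K: "{i. i < Suc n \<and> x \<in> ends (es ! i)} = {}"
    proof -
      { fix i assume i: "i < Suc n" "x \<in> ends (es ! i)"
        then have "x \<in> set xs" using E[of i] n_def by (auto simp: nth_mem) }
      then show ?thesis using False by blast
    qed
    show ?thesis unfolding c K by simp
  next
    case True
    then obtain j where j: "j < n" "x = xs ! j" using n_def by (auto simp: in_set_conv_nth)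
    have K: "{i. i < Suc n \<and> x \<in> ends (es ! i)} = {j, Suc j}"
    proof (intro set_eqI iffI)
      fix i assume "i \<in> {i. i < Suc n \<and> x \<in> ends (es ! i)}"
      then have i: "i \<le> n" "x \<in> ends (es ! i)" by auto
      then have "(i < n \<and> xs ! j = xs ! i) \<or> (0 < i \<and> xs ! j = xs ! (i - 1))" using E j by auto
      then have "i = j \<or> i - 1 = j \<and> 0 < i" using d(3) j i(1) n_def by (auto simp: nth_eq_iff_index_eq)
      then show "i \<in> {j, Suc j}" by auto
    next
      fix i assume "i \<in> {j, Suc j}"
      then show "i \<in> {i. i < Suc n \<and> x \<in> ends (es ! i)}" using E j by auto
    qed
    show ?thesis unfolding c K by simp
  qed
qed

lemma path_even: "path_bdry ends A \<Longrightarrow> even (card {g \<in> A. x \<in> ends g})"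
  unfolding path_bdry_def by (metis closed_path_even open_path_even)

lemma path_ends_ne:
  assumes "path_bdry ends A" "g \<in> A"
  shows "ends g \<noteq> {}"
  using assms(1) unfolding path_bdry_def
proof
  assume "closed_path ends A"
  then obtain es xs where "set es = A" "\<forall>i<length es. ends (es!i) = {xs!i, xs!(Suc i mod length es)}"
    unfolding closed_path_def by blast
  then show ?thesis using assms(2) by (auto simp: in_set_conv_nth)
next
  assume "open_path ends A"
  then obtain es xs where d: "set es = A" "xs \<noteq> []" "length es = Suc (length xs)" "ends (es!0) = {xs!0}"
    "ends (last es) = {last xs}" "\<forall>i. 0<i \<and> i<length xs \<longrightarrow> ends (es!i) = {xs!(i-1), xs!i}"
    unfolding open_path_def by blast
  from assms(2) d(1) obtain i where i: "i < length es" "g = es!i" by (auto simp: in_set_conv_nth)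
  show ?thesis
  proof (cases "i = 0")
    case True then show ?thesis using i d by auto
  next
    case False
    show ?thesis
    proof (cases "i = length xs")
      case True
      have "es \<noteq> []" using d(3) by auto
      then have "last es = es ! length xs" using d(3) by (simp add: last_conv_nth)
      then show ?thesis using True i d by auto
    next
      case False2: False
      then show ?thesis using False i d by auto
    qed
  qed
qed

lemma path_ne: "path_bdry ends A \<Longrightarrow> A \<noteq> {}"
  unfolding path_bdry_def closed_path_def open_path_def by auto

lemma fp_extend:
  assumes fp: "face_path Fc W bd fs vs" and w: "w \<in> W" and l: "last fs \<in> bd w"
    and f: "f \<in> bd w" "f \<in> Fc"
  shows "\<exists>fs' vs'. face_path Fc W bd fs' vs' \<and> hd fs' = hd fs \<and> last fs' = f \<and>
           set fs' \<subseteq> insert f (set fs) \<and> set vs' \<subseteq> insert w (set vs)"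
proof -
  have P: "fs \<noteq> []" "length vs = length fs - 1" "distinct vs" "set vs \<subseteq> W" "set fs \<subseteq> Fc"
    "\<And>i. i < length vs \<Longrightarrow> fs ! i \<in> bd (vs ! i) \<and> fs ! Suc i \<in> bd (vs ! i)"
    using fp unfolding face_path_def by auto
  have lfs: "last fs = fs ! length vs" using P(1,2) by (simp add: last_conv_nth)
  have len: "length fs = Suc (length vs)" using P(1,2) by (cases fs) auto
  show ?thesis
  proof (cases "w \<in> set vs")
    case False
    define fs' where "fs' = fs @ [f]"
    define vs' where "vs' = vs @ [w]"
    have B: "fs' \<noteq> []" "length vs' = length fs' - 1" "distinct vs'" "set vs' \<subseteq> W" "set fs' \<subseteq> Fc"
        using P False w f len unfolding fs'_def vs'_def by auto
    have A: "\<forall>i < length vs'. fs' ! i \<in> bd (vs' ! i) \<and> fs' ! Suc i \<in> bd (vs' ! i)"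
    proof (intro allI impI)
      fix i assume i: "i < length vs'"
      show "fs' ! i \<in> bd (vs' ! i) \<and> fs' ! Suc i \<in> bd (vs' ! i)"
      proof (cases "i < length vs")
        case True
        then show ?thesis using P(6)[OF True] len unfolding fs'_def vs'_def by (simp add: nth_append)
      next
        case False
        then have "i = length vs" using i unfolding vs'_def by simp
        then show ?thesis using l lfs f len unfolding fs'_def vs'_def by (simp add: nth_append)
      qed
    qed
    have "face_path Fc W bd fs' vs'" unfolding face_path_def using A B by blast
    moreover have "hd fs' = hd fs" "last fs' = f" "set fs' \<subseteq> insert f (set fs)" "set vs' \<subseteq> insert w (set vs)"
      using P(1) unfolding fs'_def vs'_def by auto
    ultimately show ?thesis by blast
  next
    case True
    then obtain i where i: "i < length vs" "vs ! i = w" by (auto simp: in_set_conv_nth)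
    define fs' where "fs' = take (Suc i) fs @ [f]"
    define vs' where "vs' = take (Suc i) vs"
    have lt: "length (take (Suc i) fs) = Suc i" "length vs' = Suc i" using i len unfolding vs'_def by auto
    have B1: "fs' \<noteq> []" "length vs' = length fs' - 1" using lt unfolding fs'_def by auto
    have B2: "distinct vs'" using P(3) unfolding vs'_def by simp
    have B3: "set vs' \<subseteq> W" using P(4) set_take_subset[of "Suc i" vs] unfolding vs'_def by blast
    have B4: "set fs' \<subseteq> Fc" using P(5) set_take_subset[of "Suc i" fs] f unfolding fs'_def by auto
    have A: "\<forall>j < length vs'. fs' ! j \<in> bd (vs' ! j) \<and> fs' ! Suc j \<in> bd (vs' ! j)"
    proof (intro allI impI)
      fix j assume j: "j < length vs'"
      then have j': "j < Suc i" using lt by simp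
      show "fs' ! j \<in> bd (vs' ! j) \<and> fs' ! Suc j \<in> bd (vs' ! j)"
      proof (cases "j < i")
        case True
        then show ?thesis using P(6)[of j] i lt unfolding fs'_def vs'_def by (simp add: nth_append)
      next
        case False
        then have "j = i" using j' by simp
        then show ?thesis using P(6)[of i] i lt f unfolding fs'_def vs'_def by (simp add: nth_append)
      qed
    qed
    have "face_path Fc W bd fs' vs'" unfolding face_path_def using A B1 B2 B3 B4 by blast
    moreover have "hd fs' = hd fs" using P(1) unfolding fs'_def by (cases fs) auto
    moreover have "last fs' = f" unfolding fs'_def by simp
    moreover have "set fs' \<subseteq> insert f (set fs)" using set_take_subset[of "Suc i" fs] unfolding fs'_def by auto
    moreover have "set vs' \<subseteq> insert w (set vs)" using set_take_subset[of "Suc i" vs] unfolding vs'_def by auto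
    ultimately show ?thesis by blast
  qed
qed

locale Lat =
  fixes Vt :: "'x set" and Ed :: "'e set" and Fc :: "'f set" and Vol :: "'v set"
    and ends :: "'e \<Rightarrow> 'x set" and ebd :: "'f \<Rightarrow> 'e set" and fbd :: "'v \<Rightarrow> 'f set"
  assumes lat: "lattice Vt Ed Fc Vol ends ebd fbd"
begin

abbreviation "vols \<equiv> iota_f Vol fbd"
abbreviation "II \<equiv> iota_e Fc ebd"
abbreviation "stab \<equiv> tc_stab Ed Fc Vol ebd fbd"
abbreviation "bdry \<equiv> bdry_faces Fc Vol fbd"
definition Rel where "Rel = {(a, b). face_equiv Ed Fc Vol ebd fbd a b \<or> face_equiv Ed Fc Vol ebd fbd b a}"
abbreviation "classes \<equiv> face_classes Ed Fc Vol ebd fbd"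
abbreviation "W \<equiv> aug_vols Ed Fc Vol ebd fbd"
abbreviation "bd \<equiv> aug_bd fbd"

lemma finFc: "finite Fc" and finVol: "finite Vol"
  and fbd_sub: "v \<in> Vol \<Longrightarrow> fbd v \<subseteq> Fc" and fbd_ne: "v \<in> Vol \<Longrightarrow> fbd v \<noteq> {}"
  and vols_le2': "f \<in> Fc \<Longrightarrow> card (vols f) \<le> 2"
  and ebd_path: "f \<in> Fc \<Longrightarrow> path_bdry ends (ebd f)"
  and ebd_sub: "f \<in> Fc \<Longrightarrow> ebd f \<subseteq> Ed"
  and I_path: "e \<in> Ed \<Longrightarrow> path_bdry vols (II e)"
  and L1: "no_interior_bdry Ed Fc Vol ebd fbd"
  and conn: "\<lbrakk>v \<in> Vol; v' \<in> Vol\<rbrakk> \<Longrightarrow> (v, v') \<in> {(a, b). a \<in> Vol \<and> b \<in> Vol \<and> fbd a \<inter> fbd b \<noteq> {}}\<^sup>*"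
  using lat unfolding lattice_def by auto

lemma mem_vols: "v \<in> vols f \<longleftrightarrow> v \<in> Vol \<and> f \<in> fbd v"
  by (simp add: iota_f_def)

lemma mem_II: "f \<in> II e \<longleftrightarrow> f \<in> Fc \<and> e \<in> ebd f"
  by (simp add: iota_e_def)

lemma II_sub: "II e \<subseteq> Fc"
  by (auto simp: iota_e_def)

lemma fin_vols: "finite (vols f)"
  by (rule finite_subset[OF _ finVol]) (auto simp: iota_f_def)

lemma vols_le2: "card (vols f) \<le> 2"
proof (cases "f \<in> Fc")
  case True then show ?thesis using vols_le2' by blast
next
  case False
  then have "vols f = {}" using fbd_sub by (auto simp: iota_f_def)
  then show ?thesis by simp
qed

lemma two_vols_not_bdry:
  assumes "x \<in> vols f" "y \<in> vols f" "x \<noteq> y"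
  shows "f \<notin> bdry"
proof -
  have "{x, y} \<subseteq> vols f" using assms by auto
  then have "card {x, y} \<le> card (vols f)" using fin_vols card_mono by blast
  then have "card (vols f) \<ge> 2" using assms(3) by simp
  then show ?thesis by (auto simp: bdry_faces_def)
qed

lemma three_vols:
  assumes "x \<in> vols f" "y \<in> vols f" "z \<in> vols f" "x \<noteq> y" "x \<noteq> z" "y \<noteq> z"
  shows False
proof -
  have "{x, y, z} \<subseteq> vols f" using assms by auto
  then have "card {x, y, z} \<le> card (vols f)" using fin_vols card_mono by blast
  then have "card (vols f) \<ge> 3" using assms(4-6) by simp
  then show False using vols_le2[of f] by simp
qed

lemma bdry_iff: "f \<in> bdry \<longleftrightarrow> f \<in> Fc \<and> card (vols f) = 1"
  by (simp add: bdry_faces_def)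

lemma bdry_vol: "f \<in> bdry \<Longrightarrow> \<exists>v. vols f = {v}"
  by (simp add: bdry_faces_def card_1_singleton_iff)

lemma face_has_vol:
  assumes "f \<in> Fc"
  shows "vols f \<noteq> {}"
proof -
  have "ebd f \<noteq> {}" using path_ne[OF ebd_path[OF assms]] .
  then obtain e where e: "e \<in> ebd f" by blast
  then have "e \<in> Ed" using ebd_sub assms by blast
  moreover have "f \<in> II e" using e assms by (simp add: mem_II)
  ultimately show ?thesis using path_ends_ne[OF I_path] by blast
qed

subsection \<open>Classes\<close>

lemma Rel_bdry: "(a, b) \<in> Rel \<Longrightarrow> a \<in> bdry \<and> b \<in> bdry"
  by (auto simp: face_equiv_def Rel_def)

lemma Rel_sym: "sym Rel"
  by (auto simp: sym_def Rel_def)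

lemma classes_iff: "C \<in> classes \<longleftrightarrow> (\<exists>x \<in> bdry. C = Rel\<^sup>* `` {x})"
  by (simp add: face_classes_def quotient_def Rel_def)

lemma class_sub: "C \<in> classes \<Longrightarrow> C \<subseteq> bdry"
proof
  fix y assume C: "C \<in> classes" and y: "y \<in> C"
  then obtain x where x: "x \<in> bdry" "C = Rel\<^sup>* `` {x}" by (auto simp: classes_iff)
  then have "(x, y) \<in> Rel\<^sup>*" using y by simp
  then show "y \<in> bdry"
  proof (cases rule: rtranclE)
    case base then show ?thesis using x by simp
  next
    case (step z) then show ?thesis using Rel_bdry by blast
  qed
qed

lemma class_step: "C \<in> classes \<Longrightarrow> a \<in> C \<Longrightarrow> (a, b) \<in> Rel \<Longrightarrow> b \<in> C"
  by (auto simp: classes_iff intro: rtrancl_into_rtrancl)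

lemma class_disj:
  assumes "C1 \<in> classes" "C2 \<in> classes" "f \<in> C1" "f \<in> C2"
  shows "C1 = C2"
proof -
  obtain x where x: "C1 = Rel\<^sup>* `` {x}" using assms(1) by (auto simp: classes_iff)
  obtain y where y: "C2 = Rel\<^sup>* `` {y}" using assms(2) by (auto simp: classes_iff)
  have s: "sym (Rel\<^sup>*)" using sym_rtrancl[OF Rel_sym] .
  have xf: "(x, f) \<in> Rel\<^sup>*" "(y, f) \<in> Rel\<^sup>*" using assms x y by auto
  then have "(f, y) \<in> Rel\<^sup>*" "(f, x) \<in> Rel\<^sup>*" using s by (auto dest: symD)
  then have "(x, y) \<in> Rel\<^sup>*" "(y, x) \<in> Rel\<^sup>*" using xf by (meson rtrancl_trans)+
  then show ?thesis unfolding x y by (auto intro: rtrancl_trans)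
qed

lemma class_of: "f \<in> bdry \<Longrightarrow> Rel\<^sup>* `` {f} \<in> classes \<and> f \<in> Rel\<^sup>* `` {f}"
  by (auto simp: classes_iff)

lemma class_ne: "C \<in> classes \<Longrightarrow> C \<noteq> {}"
  by (auto simp: classes_iff)

lemma fin_classes: "finite classes"
proof -
  have "classes \<subseteq> Pow Fc" using class_sub by (auto simp: bdry_faces_def)
  then show ?thesis using finFc by (meson finite_Pow_iff finite_subset)
qed

subsection \<open>Augmented lattice\<close>

lemma W_iff: "w \<in> W \<longleftrightarrow> (\<exists>v \<in> Vol. w = Inl v) \<or> (\<exists>C \<in> classes. w = Inr C)"
  by (auto simp: aug_vols_def)

lemma Inl_W[simp]: "Inl v \<in> W \<longleftrightarrow> v \<in> Vol"
  by (auto simp: aug_vols_def)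

lemma Inr_W[simp]: "Inr C \<in> W \<longleftrightarrow> C \<in> classes"
  by (auto simp: aug_vols_def)

lemma bd_Inl[simp]: "bd (Inl v) = fbd v" and bd_Inr[simp]: "bd (Inr C) = C"
  by (simp_all add: aug_bd_def)

lemma finW: "finite W"
  unfolding aug_vols_def using finVol fin_classes by simp

lemma bd_sub:
  assumes "w \<in> W" shows "bd w \<subseteq> Fc"
proof (cases w)
  case (Inl v) then show ?thesis using assms fbd_sub by simp
next
  case (Inr C) then have "C \<subseteq> bdry" using assms class_sub by simp
  then show ?thesis using Inr by (auto simp: bdry_faces_def)
qed

lemma bd_ne: "w \<in> W \<Longrightarrow> bd w \<noteq> {}"
  using fbd_ne class_ne by (auto simp: W_iff)

lemma excl:
  assumes W: "a \<in> W" "b \<in> W" "w \<in> W" and ab: "a \<noteq> b"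
    and g: "g \<in> bd a" "g \<in> bd b" "g \<in> bd w"
  shows "w = a \<or> w = b"
proof (rule ccontr)
  assume n: "\<not> (w = a \<or> w = b)"
  show False
  proof (cases a)
    case (Inl x)
    show False
    proof (cases b)
      case (Inl y)
      show False
      proof (cases w)
        case (Inl z)
        show False using three_vols[of x g y z] \<open>a = Inl x\<close> \<open>b = Inl y\<close> Inl W g ab n by (auto simp: mem_vols)
      next
        case (Inr C)
        have "g \<in> bdry" using class_sub W g Inr by auto
        then show False using two_vols_not_bdry[of x g y] \<open>a = Inl x\<close> \<open>b = Inl y\<close> W g ab by (auto simp: mem_vols)
      qed
    next
      case (Inr C)
      show False
      proof (cases w)
        case (Inl z)
        have "g \<in> bdry" using class_sub W g \<open>b = Inr C\<close> by auto
        then show False using two_vols_not_bdry[of x g z] \<open>a = Inl x\<close> Inl W g n by (auto simp: mem_vols)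
      next
        case (Inr C')
        have "C = C'" using class_disj[of C C' g] W g \<open>b = Inr C\<close> Inr by auto
        then show False using n Inr \<open>b = Inr C\<close> by simp
      qed
    qed
  next
    case (Inr C)
    show False
    proof (cases b)
      case (Inl y)
      show False
      proof (cases w)
        case (Inl z)
        have "g \<in> bdry" using class_sub W g \<open>a = Inr C\<close> by auto
        then show False using two_vols_not_bdry[of y g z] \<open>b = Inl y\<close> Inl W g n by (auto simp: mem_vols)
      next
        case (Inr C')
        have "C = C'" using class_disj[of C C' g] W g \<open>a = Inr C\<close> Inr by auto
        then show False using n Inr \<open>a = Inr C\<close> by simp
      qed
    next
      case (Inr C')
      have "C = C'" using class_disj[of C C' g] W g \<open>a = Inr C\<close> Inr by auto
      then show False using ab Inr \<open>a = Inr C\<close> by simp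
    qed
  qed
qed

lemma two:
  assumes "w \<in> W" "g \<in> bd w"
  shows "\<exists>w' \<in> W. w' \<noteq> w \<and> g \<in> bd w'"
proof (cases w)
  case (Inl v)
  then have v: "v \<in> vols g" using assms by (simp add: mem_vols)
  have gF: "g \<in> Fc" using bd_sub assms by blast
  show ?thesis
  proof (cases "g \<in> bdry")
    case True
    have "Inr (Rel\<^sup>* `` {g}) \<in> W" "g \<in> bd (Inr (Rel\<^sup>* `` {g}))" using class_of[OF True] by auto
    then show ?thesis using Inl by blast
  next
    case False
    have "card (vols g) \<noteq> 1" using False gF by (simp add: bdry_iff)
    then have "vols g \<noteq> {v}" by auto
    then obtain u where "u \<in> vols g" "u \<noteq> v" using v by blast
    then show ?thesis using Inl by (auto simp: mem_vols intro!: bexI[of _ "Inl u"])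
  qed
next
  case (Inr C)
  then have "g \<in> bdry" using assms class_sub by auto
  then obtain v where "vols g = {v}" using bdry_vol by blast
  then have "v \<in> Vol" "g \<in> fbd v" by (auto simp: mem_vols)
  then show ?thesis using Inr by (auto intro!: bexI[of _ "Inl v"])
qed

lemma bd_mem_W_exists: "g \<in> Fc \<Longrightarrow> \<exists>w \<in> W. g \<in> bd w"
proof -
  assume "g \<in> Fc"
  then obtain v where "v \<in> vols g" using face_has_vol by blast
  then show ?thesis by (auto simp: mem_vols intro!: bexI[of _ "Inl v"])
qed

end

context Lat
begin

lemma fbd_memF: "v \<in> Vol \<Longrightarrow> x \<in> fbd v \<Longrightarrow> x \<in> Fc"
  using fbd_sub by blast

lemma II_memF: "x \<in> II e \<Longrightarrow> x \<in> Fc"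
  by (simp add: mem_II)

lemma finII: "finite (II e)"
  using finite_subset[OF II_sub finFc] .

lemma fin_fbd: "v \<in> Vol \<Longrightarrow> finite (fbd v)"
  using finite_subset[OF fbd_sub finFc] by blast

lemma gen_commute:
  assumes e: "e \<in> Ed" and v: "v \<in> Vol"
  shows "even (card (fbd v \<inter> II e))"
proof -
  have eq: "fbd v \<inter> II e = {g \<in> II e. v \<in> vols g}" using v by (auto simp: mem_vols)
  show ?thesis unfolding eq using path_even[OF I_path[OF e]] .
qed

lemma gen_commute': "e \<in> Ed \<Longrightarrow> v \<in> Vol \<Longrightarrow> even (card (II e \<inter> fbd v))"
  using gen_commute by (simp add: Int_commute)

lemma stab_sub:
  assumes "p \<in> stab" shows "fst p \<subseteq> Fc \<and> snd p \<subseteq> Fc"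
  using assms unfolding tc_stab_def
proof (induction rule: gen_group.induct)
  case one then show ?case by simp
next
  case (mult p g)
  have "fst g \<subseteq> Fc \<and> snd g \<subseteq> Fc" using mult.hyps(2) by (auto simp: tc_gens_def intro: fbd_memF II_memF)
  then show ?case using mult.IH by (auto simp: psum_def)
qed

lemma stabX_closed:
  assumes "p \<in> stab" and e: "e \<in> Ed" shows "even (card (II e \<inter> fst p))"
  using assms(1) unfolding tc_stab_def
proof (induction rule: gen_group.induct)
  case one then show ?case by simp
next
  case (mult p g)
  have g: "even (card (II e \<inter> fst g))"
    using mult.hyps(2) gen_commute'[OF e] by (auto simp: tc_gens_def)
  show ?case unfolding psum_sdiff fst_conv par_sdiff[OF finII] using mult.IH g by simp
qed

lemma stabZ_vol:
  assumes "p \<in> stab" and v: "v \<in> Vol" shows "even (card (fbd v \<inter> snd p))"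
  using assms(1) unfolding tc_stab_def
proof (induction rule: gen_group.induct)
  case one then show ?case by simp
next
  case (mult p g)
  have g: "even (card (fbd v \<inter> snd g))"
    using mult.hyps(2) gen_commute[OF _ v] by (auto simp: tc_gens_def)
  show ?case unfolding psum_sdiff snd_conv par_sdiff[OF fin_fbd[OF v]] using mult.IH g by simp
qed

lemma closed_orth:
  assumes S: "S \<subseteq> Fc" "\<forall>e \<in> Ed. even (card (S \<inter> II e))" and p: "p \<in> stab"
  shows "even (card (S \<inter> snd p))"
  using p unfolding tc_stab_def
proof (induction rule: gen_group.induct)
  case one then show ?case by simp
next
  case (mult p g)
  have fin: "finite S" using finite_subset[OF S(1) finFc] .
  have g: "even (card (S \<inter> snd g))"
    using mult.hyps(2) S(2) by (auto simp: tc_gens_def)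
  show ?case unfolding psum_sdiff snd_conv par_sdiff[OF fin] using mult.IH g by simp
qed

lemma class_I_even:
  assumes C: "C \<in> classes" and e: "e \<in> Ed"
  shows "even (card (C \<inter> II e))"
proof -
  have Cb: "C \<subseteq> bdry" using class_sub[OF C] .
  from I_path[OF e] show ?thesis unfolding path_bdry_def
  proof
    assume "closed_path vols (II e)"
    then obtain es xs where d: "distinct es" "set es = II e" "distinct xs" "length es = length xs"
      "length es \<ge> 2" and H: "\<forall>i < length es. vols (es ! i) = {xs ! i, xs ! (Suc i mod length es)}"
      unfolding closed_path_def by blast
    have "\<forall>g \<in> II e. g \<notin> bdry"
    proof
      fix g assume "g \<in> II e"
      then have "g \<in> set es" using d(2) by simp
      then obtain i where i: "i < length es" "g = es ! i" by (auto simp: in_set_conv_nth)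
      have n0: "0 < length es" using d(5) by linarith
      have sm: "Suc i mod length es < length es" using n0 by simp
      have ne: "i \<noteq> Suc i mod length es"
      proof (cases "Suc i < length es")
        case True then show ?thesis by simp
      next
        case False
        then have "Suc i = length es" using i by simp
        then show ?thesis using d(5) by simp
      qed
      have "xs ! i \<noteq> xs ! (Suc i mod length es)"
        using ne i(1) sm d(3,4) by (simp add: nth_eq_iff_index_eq)
      then show "g \<notin> bdry" using two_vols_not_bdry[of "xs ! i" g "xs ! (Suc i mod length es)"] H i by auto
    qed
    then have "C \<inter> II e = {}" using Cb by blast
    then show ?thesis by simp
  next
    assume "open_path vols (II e)"
    then obtain es xs where d: "distinct es" "set es = II e" "distinct xs" "xs \<noteq> []"
      "length es = Suc (length xs)" and H0: "vols (es ! 0) = {xs ! 0}" and HL: "vols (last es) = {last xs}"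
      and H: "\<forall>i. 0 < i \<and> i < length xs \<longrightarrow> vols (es ! i) = {xs ! (i - 1), xs ! i}"
      unfolding open_path_def by blast
    define n where "n = length xs"
    have n0: "n > 0" using d(4) n_def by auto
    have "es \<noteq> []" using d(5) by auto
    then have lastes: "last es = es ! n" using d(5) n_def by (simp add: last_conv_nth)
    have lastxs: "last xs = xs ! (n - 1)" using d(4) n_def by (simp add: last_conv_nth)
    define a where "a = es ! 0"
    define b where "b = es ! n"
    have esF: "set es \<subseteq> Fc" using d(2) II_sub by simp
    have aF: "a \<in> Fc" "b \<in> Fc" using esF d(5) n_def unfolding a_def b_def by auto
    have ab: "a \<noteq> b" using d(1,5) n0 n_def unfolding a_def b_def by (simp add: nth_eq_iff_index_eq)
    have abd: "a \<in> bdry" "b \<in> bdry" using aF H0 HL lastes lastxs unfolding a_def b_def by (auto simp: bdry_iff)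
    have mid: "C \<inter> II e \<subseteq> {a, b}"
    proof
      fix g assume g: "g \<in> C \<inter> II e"
      then have "g \<in> set es" using d(2) by simp
      then obtain i where i: "i < Suc n" "g = es ! i" using d(5) n_def by (auto simp: in_set_conv_nth)
      show "g \<in> {a, b}"
      proof (cases "i = 0 \<or> i = n")
        case True then show ?thesis using i unfolding a_def b_def by auto
      next
        case False
        then have "0 < i" "i < n" using i by auto
        then have v: "vols g = {xs ! (i - 1), xs ! i}" using H i n_def by auto
        have "xs ! (i - 1) \<noteq> xs ! i" using d(3) \<open>0 < i\<close> \<open>i < n\<close> n_def by (simp add: nth_eq_iff_index_eq)
        then have "g \<notin> bdry" using two_vols_not_bdry[of "xs ! (i - 1)" g "xs ! i"] v by auto
        then show ?thesis using g Cb by blast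
      qed
    qed
    have VE: "\<And>i. i < n \<Longrightarrow> xs ! i \<in> vols (es ! i) \<and> xs ! i \<in> vols (es ! Suc i)"
    proof -
      fix i assume i: "i < n"
      have 1: "xs ! i \<in> vols (es ! i)"
      proof (cases "i = 0")
        case True then show ?thesis using H0 by simp
      next
        case False then show ?thesis using H i n_def by auto
      qed
      have 2: "xs ! i \<in> vols (es ! Suc i)"
      proof (cases "Suc i = n")
        case True then have "i = n - 1" by simp
        then show ?thesis using HL lastes lastxs True by simp
      next
        case False then show ?thesis using H i n_def by auto
      qed
      show "xs ! i \<in> vols (es ! i) \<and> xs ! i \<in> vols (es ! Suc i)" using 1 2 by simp
    qed
    have fp: "face_path Fc Vol fbd es xs"
      unfolding face_path_def
    proof (intro conjI)
      show "es \<noteq> []" by fact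
      show "length xs = length es - 1" using d(5) by simp
      show "distinct xs" by fact
      show "set xs \<subseteq> Vol"
      proof
        fix x assume "x \<in> set xs"
        then obtain i where "i < n" "x = xs ! i" using n_def by (auto simp: in_set_conv_nth)
        then show "x \<in> Vol" using VE[of i] by (simp add: mem_vols)
      qed
      show "set es \<subseteq> Fc" by fact
      show "\<forall>i<length xs. es ! i \<in> fbd (xs ! i) \<and> es ! Suc i \<in> fbd (xs ! i)"
        using VE n_def by (simp add: mem_vols)
    qed
    have st: "({}, set es) \<in> stab"
    proof -
      have g: "({}, II e) \<in> tc_gens Ed Fc Vol ebd fbd" using e by (auto simp: tc_gens_def)
      have "psum ({}, {}) ({}, II e) \<in> gen_group (tc_gens Ed Fc Vol ebd fbd)"
        by (rule gen_group.mult[OF gen_group.one g])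
      moreover have "psum ({}, {}) ({}, II e) = ({}, II e)" by (simp add: psum_def)
      ultimately show ?thesis using d(2) unfolding tc_stab_def by simp
    qed
    have hl: "hd es = a" "last es = b" using \<open>es \<noteq> []\<close> lastes unfolding a_def b_def
      by (simp_all add: hd_conv_nth)
    have fe: "face_equiv Ed Fc Vol ebd fbd a b"
      unfolding face_equiv_def using abd fp st hl by blast
    have r1: "(a, b) \<in> Rel" using fe unfolding Rel_def by (simp only: mem_Collect_eq case_prod_conv simp_thms)
    have r2: "(b, a) \<in> Rel" using fe unfolding Rel_def by (simp only: mem_Collect_eq case_prod_conv simp_thms)
    have ac: "a \<in> C \<longleftrightarrow> b \<in> C"
    proof
      assume "a \<in> C" then show "b \<in> C" by (rule class_step[OF C _ r1])
    next
      assume "b \<in> C" then show "a \<in> C" by (rule class_step[OF C _ r2])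
    qed
    have "a \<in> set es" "b \<in> set es" using d(5) n_def unfolding a_def b_def by simp_all
    then have abI: "a \<in> II e" "b \<in> II e" by (simp_all add: d(2)[symmetric])
    show ?thesis
    proof (cases "a \<in> C")
      case True
      then have "C \<inter> II e = {a, b}" using ac abI mid by blast
      then show ?thesis using ab by simp
    next
      case False
      then have "C \<inter> II e = {}" using ac mid by blast
      then show ?thesis by simp
    qed
  qed
qed

lemma bd_closed: "w \<in> W \<Longrightarrow> e \<in> Ed \<Longrightarrow> even (card (bd w \<inter> II e))"
  using gen_commute class_I_even by (auto simp: W_iff)

end

context Lat
begin

definition Good :: "'f set \<Rightarrow> 'f set \<Rightarrow> bool" where
  "Good S y \<longleftrightarrow> y \<subseteq> Fc \<and> (\<forall>v \<in> Vol. even (card (fbd v \<inter> y))) \<and> even (card (S \<inter> y))"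

lemma Good_empty: "Good S {}"
  by (simp add: Good_def)

lemma Good_sdiff:
  assumes S: "S \<subseteq> Fc" and y: "Good S y" and y': "Good S y'"
  shows "Good S (sdiff y y')"
proof -
  have finS: "finite S" using finite_subset[OF S finFc] .
  have 1: "sdiff y y' \<subseteq> Fc" using y y' by (auto simp: Good_def sdiff_def)
  have 2: "\<forall>v \<in> Vol. even (card (fbd v \<inter> sdiff y y'))"
  proof
    fix v assume v: "v \<in> Vol"
    have "even (card (fbd v \<inter> y))" "even (card (fbd v \<inter> y'))" using y y' v by (auto simp: Good_def)
    then show "even (card (fbd v \<inter> sdiff y y'))" unfolding par_sdiff[OF fin_fbd[OF v]] by simp
  qed
  have "even (card (S \<inter> y))" "even (card (S \<inter> y'))" using y y' by (auto simp: Good_def)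
  then have 3: "even (card (S \<inter> sdiff y y'))" unfolding par_sdiff[OF finS] by simp
  show ?thesis using 1 2 3 by (simp add: Good_def)
qed

lemma sdiff_Int: "sdiff A B \<inter> C = sdiff (A \<inter> C) (B \<inter> C)"
  by (auto simp: sdiff_def)

context
  fixes S :: "'f set"
  assumes SF: "S \<subseteq> Fc" and Sorth: "\<forall>p \<in> stab. even (card (S \<inter> snd p))"
begin

lemma Good_pair:
  assumes fe: "face_equiv Ed Fc Vol ebd fbd a b" and ab: "a \<noteq> b"
  shows "\<exists>y. Good S y \<and> y \<inter> bdry = {a, b}"
proof -
  obtain fs vs where fp: "face_path Fc Vol fbd fs vs" and h: "hd fs = a" and l: "last fs = b"
    and st: "({}, set fs) \<in> stab"
    using fe ab unfolding face_equiv_def by blast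
  have abd: "a \<in> bdry" "b \<in> bdry" using fe unfolding face_equiv_def by auto
  have P: "fs \<noteq> []" "length vs = length fs - 1" "distinct vs" "set vs \<subseteq> Vol" "set fs \<subseteq> Fc"
    "\<And>i. i < length vs \<Longrightarrow> fs ! i \<in> fbd (vs ! i) \<and> fs ! Suc i \<in> fbd (vs ! i)"
    using fp unfolding face_path_def by auto
  have G: "Good S (set fs)"
    unfolding Good_def using P(5) stabZ_vol[OF st] Sorth st by auto
  have "set fs \<inter> bdry = {a, b}"
  proof
    show "{a, b} \<subseteq> set fs \<inter> bdry" using abd h l P(1) by auto
  next
    show "set fs \<inter> bdry \<subseteq> {a, b}"
    proof
      fix g assume g: "g \<in> set fs \<inter> bdry"
      then obtain i where i: "i < length fs" "g = fs ! i" by (auto simp: in_set_conv_nth)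
      show "g \<in> {a, b}"
      proof (cases "i = 0")
        case True then show ?thesis using i h P(1) by (simp add: hd_conv_nth)
      next
        case False
        show ?thesis
        proof (cases "i = length fs - 1")
          case True then show ?thesis using i l P(1) by (simp add: last_conv_nth)
        next
          case False2: False
          have i1: "i - 1 < length vs" "i < length vs" using i False False2 P(2) by auto
          have A: "g \<in> fbd (vs ! i)" using P(6)[OF i1(2)] i by simp
          have B: "g \<in> fbd (vs ! (i - 1))" using P(6)[OF i1(1)] i False by simp
          have ne: "vs ! (i - 1) \<noteq> vs ! i" using P(3) i1 False by (simp add: nth_eq_iff_index_eq)
          have "vs ! i \<in> Vol" "vs ! (i - 1) \<in> Vol" using P(4) i1 by auto
          then have "g \<notin> bdry" using two_vols_not_bdry[of "vs ! (i - 1)" g "vs ! i"] A B ne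
            by (simp add: mem_vols)
          then show ?thesis using g by blast
        qed
      qed
    qed
  qed
  then show ?thesis using G by blast
qed

lemma Good_chain:
  assumes "(x, b) \<in> Rel\<^sup>*"
  shows "\<exists>y. Good S y \<and> y \<inter> bdry = sdiff {x} {b}"
  using assms
proof (induction rule: rtrancl_induct)
  case base
  have "sdiff {x} {x} = {}" by (simp add: sdiff_def)
  then show ?case using Good_empty by auto
next
  case (step a b)
  obtain y where y: "Good S y" "y \<inter> bdry = sdiff {x} {a}" using step.IH by blast
  show ?case
  proof (cases "a = b")
    case True then show ?thesis using y by blast
  next
    case False
    have "\<exists>y'. Good S y' \<and> y' \<inter> bdry = {a, b}"
    proof -
      from step.hyps(2) have "face_equiv Ed Fc Vol ebd fbd a b \<or> face_equiv Ed Fc Vol ebd fbd b a" by (simp add: Rel_def)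
      then show ?thesis
      proof
        assume "face_equiv Ed Fc Vol ebd fbd a b"
        then show ?thesis using Good_pair False by blast
      next
        assume "face_equiv Ed Fc Vol ebd fbd b a"
        then obtain y' where "Good S y'" "y' \<inter> bdry = {b, a}" using Good_pair False by metis
        then show ?thesis by (metis insert_commute)
      qed
    qed
    then obtain y' where y': "Good S y'" "y' \<inter> bdry = {a, b}" by blast
    have "Good S (sdiff y y')" using Good_sdiff[OF SF y(1) y'(1)] .
    moreover have "sdiff y y' \<inter> bdry = sdiff {x} {b}"
      unfolding sdiff_Int y(2) y'(2) using False by (auto simp: sdiff_def)
    ultimately show ?thesis by blast
  qed
qed

lemma Good_class:
  assumes C: "C \<in> classes" and a: "a \<in> C" and b: "b \<in> C"
  shows "\<exists>y. Good S y \<and> y \<inter> bdry = sdiff {a} {b}"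
proof -
  obtain x where x: "C = Rel\<^sup>* `` {x}" using C by (auto simp: classes_iff)
  have "(x, a) \<in> Rel\<^sup>*" "(x, b) \<in> Rel\<^sup>*" using a b unfolding x by (simp_all only: Image_singleton_iff)
  then obtain y1 y2 where y1: "Good S y1" "y1 \<inter> bdry = sdiff {x} {a}"
    and y2: "Good S y2" "y2 \<inter> bdry = sdiff {x} {b}" using Good_chain by metis
  have "Good S (sdiff y1 y2)" using Good_sdiff[OF SF y1(1) y2(1)] .
  moreover have "sdiff y1 y2 \<inter> bdry = sdiff {a} {b}"
    unfolding sdiff_Int y1(2) y2(2) by (auto simp: sdiff_def)
  ultimately show ?thesis by blast
qed

lemma Good_T:
  assumes "finite T" "T \<subseteq> bdry" "\<forall>C \<in> classes. even (card (T \<inter> C))"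
  shows "\<exists>y. Good S y \<and> y \<inter> bdry = T"
  using assms
proof (induction "card T" arbitrary: T rule: less_induct)
  case less
  show ?case
  proof (cases "T = {}")
    case True then show ?thesis using Good_empty by auto
  next
    case False
    then obtain a where aT: "a \<in> T" by blast
    then have abd: "a \<in> bdry" using less.prems(2) by blast
    define C where "C = Rel\<^sup>* `` {a}"
    have C: "C \<in> classes" "a \<in> C" using class_of[OF abd] C_def by auto
    have ev: "even (card (T \<inter> C))" using less.prems(3) C by blast
    have "T \<inter> C \<noteq> {a}" using ev by auto
    then obtain b where b: "b \<in> T" "b \<in> C" "b \<noteq> a" using aT C by blast
    define T' where "T' = T - {a, b}"
    have finT': "finite T'" using less.prems(1) T'_def by simp
    have lt: "card T' < card T"
      unfolding T'_def using less.prems(1) aT by (intro psubset_card_mono) auto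
    have T'sub: "T' \<subseteq> bdry" using less.prems(2) T'_def by blast
    have T'ev: "\<forall>C' \<in> classes. even (card (T' \<inter> C'))"
    proof
      fix C' assume C': "C' \<in> classes"
      show "even (card (T' \<inter> C'))"
      proof (cases "a \<in> C'")
        case True
        then have "C' = C" using class_disj[OF C' C(1) True C(2)] by simp
        then have sub: "{a, b} \<subseteq> T \<inter> C'" using aT b C by auto
        have eq: "T' \<inter> C' = (T \<inter> C') - {a, b}" unfolding T'_def by blast
        have fin: "finite (T \<inter> C')" using less.prems(1) by simp
        have "card (T' \<inter> C') = card (T \<inter> C') - 2"
          unfolding eq using card_Diff_subset[OF _ sub] b(3) by simp
        moreover have "card (T \<inter> C') \<ge> 2"
          using card_mono[OF fin sub] b(3) by simp
        moreover have "even (card (T \<inter> C'))" using less.prems(3) C' by blast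
        ultimately show ?thesis by simp
      next
        case False
        have "b \<notin> C'"
        proof
          assume "b \<in> C'"
          then have "C' = C" using class_disj[OF C' C(1) _ b(2)] by simp
          then show False using False C by simp
        qed
        then have "T' \<inter> C' = T \<inter> C'" unfolding T'_def using False by blast
        then show ?thesis using less.prems(3) C' by simp
      qed
    qed
    obtain y' where y': "Good S y'" "y' \<inter> bdry = T'" using less.hyps[OF lt finT' T'sub T'ev] by blast
    obtain yab where yab: "Good S yab" "yab \<inter> bdry = sdiff {a} {b}" using Good_class[OF C(1) C(2) b(2)] by blast
    have "Good S (sdiff y' yab)" using Good_sdiff[OF SF y'(1) yab(1)] .
    moreover have "sdiff y' yab \<inter> bdry = T"
      unfolding sdiff_Int y'(2) yab(2) T'_def using aT b by (auto simp: sdiff_def)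
    ultimately show ?thesis by blast
  qed
qed

lemma core:
  assumes zF: "z \<subseteq> Fc" and zW: "\<forall>w \<in> W. even (card (bd w \<inter> z))"
  shows "even (card (S \<inter> z))"
proof -
  define T where "T = z \<inter> bdry"
  have finT: "finite T" using finite_subset[OF zF finFc] T_def by simp
  have Tev: "\<forall>C \<in> classes. even (card (T \<inter> C))"
  proof
    fix C assume C: "C \<in> classes"
    have "T \<inter> C = bd (Inr C) \<inter> z" using class_sub[OF C] T_def by auto
    moreover have "Inr C \<in> W" using C by simp
    ultimately show "even (card (T \<inter> C))" using zW by metis
  qed
  obtain y where y: "Good S y" "y \<inter> bdry = T" using Good_T[OF finT _ Tev] T_def by blast
  define z' where "z' = sdiff z y"
  have z'F: "z' \<subseteq> Fc" using zF y(1) by (auto simp: z'_def sdiff_def Good_def)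
  have z'b: "z' \<inter> bdry = {}" unfolding z'_def sdiff_Int y(2) T_def by (simp add: sdiff_def)
  have z'v: "\<forall>v \<in> Vol. even (card (z' \<inter> fbd v))"
  proof
    fix v assume v: "v \<in> Vol"
    have "even (card (fbd v \<inter> z))" using zW v by (metis Inl_W bd_Inl)
    moreover have "even (card (fbd v \<inter> y))" using y(1) v by (simp add: Good_def)
    ultimately have "even (card (fbd v \<inter> z'))" unfolding z'_def par_sdiff[OF fin_fbd[OF v]] by simp
    then show "even (card (z' \<inter> fbd v))" by (simp add: Int_commute)
  qed
  have "({}, z') \<in> stab" using L1 z'F z'b z'v unfolding no_interior_bdry_def by blast
  then have "even (card (S \<inter> z'))" using Sorth by fastforce
  moreover have "even (card (S \<inter> y))" using y(1) by (simp add: Good_def)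
  moreover have finS: "finite S" using finite_subset[OF SF finFc] .
  ultimately show ?thesis unfolding z'_def par_sdiff[OF finS] by simp
qed

end

end

context Lat
begin

lemma cut_from_S:
  assumes Sne: "S \<noteq> {}" and SE: "S \<subseteq> E" and SF: "S \<subseteq> Fc"
    and Sorth: "\<forall>p \<in> stab. even (card (S \<inter> snd p))"
  shows "cut_set Fc W bd E"
proof -
  obtain f where fS: "f \<in> S" using Sne by blast
  then have fF: "f \<in> Fc" using SF by blast
  obtain a where a: "a \<in> W" "f \<in> bd a" using bd_mem_W_exists[OF fF] by blast
  obtain b where b: "b \<in> W" "b \<noteq> a" "f \<in> bd b" using two[OF a] by blast
  have "\<forall>fs vs. face_path Fc W bd fs vs \<and> hd fs \<in> bd a \<and> last fs \<in> bd b \<and>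
      a \<notin> set vs \<and> b \<notin> set vs \<longrightarrow> E \<inter> set fs \<noteq> {}"
  proof (intro allI impI notI)
    fix fs vs
    assume H: "face_path Fc W bd fs vs \<and> hd fs \<in> bd a \<and> last fs \<in> bd b \<and> a \<notin> set vs \<and> b \<notin> set vs"
      and E0: "E \<inter> set fs = {}"
    have P: "fs \<noteq> []" "length vs = length fs - 1" "distinct vs" "set vs \<subseteq> W" "set fs \<subseteq> Fc"
      "\<And>i. i < length vs \<Longrightarrow> fs ! i \<in> bd (vs ! i) \<and> fs ! Suc i \<in> bd (vs ! i)"
      using H unfolding face_path_def by auto
    have hd: "fs ! 0 \<in> bd a" using H P(1) by (simp add: hd_conv_nth)
    have lst: "fs ! (length fs - 1) \<in> bd b" using H P(1) by (simp add: last_conv_nth)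
    define m where "m = length fs"
    have m0: "m > 0" using P(1) m_def by simp
    have lvs: "length vs = m - 1" using P(2) m_def by simp
    define u where "u = a # vs @ [b]"
    have u_nth: "\<And>i. i \<le> m \<Longrightarrow> u ! i = (if i = 0 then a else if i = m then b else vs ! (i - 1))"
    proof -
      fix i assume i: "i \<le> m"
      show "u ! i = (if i = 0 then a else if i = m then b else vs ! (i - 1))"
      proof (cases i)
        case 0 then show ?thesis using u_def by simp
      next
        case (Suc j)
        then have "u ! i = (vs @ [b]) ! j" using u_def by simp
        also have "\<dots> = (if j < length vs then vs ! j else b)" using i Suc lvs by (simp add: nth_append)
        finally show ?thesis using Suc i lvs m0 by auto
      qed
    qed
    have ud: "distinct u" using H P(3) b(2) unfolding u_def by auto
    have lu: "length u = Suc m" using lvs m0 unfolding u_def by simp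
    have uW: "\<And>i. i \<le> m \<Longrightarrow> u ! i \<in> W"
    proof -
      fix i assume "i \<le> m"
      then have "u ! i \<in> set u" using lu by simp
      then show "u ! i \<in> W" using P(4) a(1) b(1) unfolding u_def by auto
    qed
    have un: "\<And>i. i < m \<Longrightarrow> u ! i \<noteq> u ! Suc i"
      using ud lu by (simp add: nth_eq_iff_index_eq)
    have inc: "\<And>i. i < m \<Longrightarrow> fs ! i \<in> bd (u ! i) \<and> fs ! i \<in> bd (u ! Suc i)"
    proof -
      fix i assume i: "i < m"
      have 1: "fs ! i \<in> bd (u ! i)"
      proof (cases "i = 0")
        case True then show ?thesis using hd u_nth[of 0] by simp
      next
        case False
        then have "u ! i = vs ! (i - 1)" using u_nth[of i] i by simp
        moreover have "i - 1 < length vs" using i False lvs by simp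
        ultimately show ?thesis using P(6)[of "i - 1"] False by simp
      qed
      have 2: "fs ! i \<in> bd (u ! Suc i)"
      proof (cases "Suc i = m")
        case True
        then have "u ! Suc i = b" using u_nth[of "Suc i"] by simp
        moreover have "i = length fs - 1" using True m_def by simp
        ultimately show ?thesis using lst by simp
      next
        case False
        then have "u ! Suc i = vs ! i" using u_nth[of "Suc i"] i by simp
        moreover have "i < length vs" using i False lvs by simp
        ultimately show ?thesis using P(6)[of i] by simp
      qed
      show "fs ! i \<in> bd (u ! i) \<and> fs ! i \<in> bd (u ! Suc i)" using 1 2 by simp
    qed
    define z where "z = chain (f # fs)"
    have zF: "z \<subseteq> Fc" using chain_sub[of "f # fs"] P(5) fF unfolding z_def by auto
    have zW: "\<forall>w \<in> W. even (card (bd w \<inter> z))"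
    proof
      fix w assume w: "w \<in> W"
      define Q where "Q = (\<lambda>i. u ! i = w)"
      have iff: "\<And>i. i < m \<Longrightarrow> (fs ! i \<in> bd w) \<longleftrightarrow> (Q i \<noteq> Q (Suc i))"
      proof -
        fix i assume i: "i < m"
        have W2: "u ! i \<in> W" "u ! Suc i \<in> W" using uW i by auto
        show "(fs ! i \<in> bd w) \<longleftrightarrow> (Q i \<noteq> Q (Suc i))"
        proof
          assume "fs ! i \<in> bd w"
          then have "w = u ! i \<or> w = u ! Suc i" using excl[OF W2 w un[OF i]] inc[OF i] by blast
          then show "Q i \<noteq> Q (Suc i)" using un[OF i] unfolding Q_def by auto
        next
          assume "Q i \<noteq> Q (Suc i)"
          then have "w = u ! i \<or> w = u ! Suc i" unfolding Q_def by auto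
          then show "fs ! i \<in> bd w" using inc[OF i] by auto
        qed
      qed
      have "length (filter (\<lambda>x. x \<in> bd w) fs) = card {i. i < m \<and> fs ! i \<in> bd w}"
        unfolding m_def by (simp add: length_filter_conv_card)
      also have "\<dots> = card {i. i < m \<and> Q i \<noteq> Q (Suc i)}"
        using iff by (intro arg_cong[where f=card] Collect_cong) blast
      finally have c: "even (length (filter (\<lambda>x. x \<in> bd w) fs)) \<longleftrightarrow> (Q 0 = Q m)"
        using telescope[of m Q] by simp
      have q0: "Q 0 \<longleftrightarrow> w = a" using u_nth[of 0] unfolding Q_def by auto
      have qm: "Q m \<longleftrightarrow> w = b" using u_nth[of m] m0 unfolding Q_def by auto
      have fw: "f \<in> bd w \<longleftrightarrow> (w = a \<or> w = b)"
        using excl[OF a(1) b(1) w b(2)[symmetric] a(2) b(3)] a(2) b(3) by auto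
      have "even (length (filter (\<lambda>x. x \<in> bd w) (f # fs)))"
      proof (cases "f \<in> bd w")
        case True
        then have "(w = a) \<noteq> (w = b)" using fw b(2) by auto
        then have "odd (length (filter (\<lambda>x. x \<in> bd w) fs))" using c q0 qm by auto
        then show ?thesis using True by simp
      next
        case False
        then have "\<not> (w = a) \<and> \<not> (w = b)" using fw by auto
        then have "even (length (filter (\<lambda>x. x \<in> bd w) fs))" using c q0 qm by auto
        then show ?thesis using False by simp
      qed
      then have "even (card (chain (f # fs) \<inter> bd w))" using chain_par by blast
      then show "even (card (bd w \<inter> z))" unfolding z_def by (simp add: Int_commute)
    qed
    have ev: "even (card (S \<inter> z))" using core[OF SF Sorth zF zW] .
    have "filter (\<lambda>x. x \<in> S) fs = []" using E0 SE by (auto simp: filter_empty_conv)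
    then have "odd (length (filter (\<lambda>x. x \<in> S) (f # fs)))" using fS by simp
    then have "odd (card (z \<inter> S))" unfolding z_def using chain_par by blast
    then show False using ev by (simp add: Int_commute)
  qed
  then show ?thesis unfolding cut_set_def using a(1) b(1) by blast
qed

definition SU :: "('v + 'f set) set \<Rightarrow> 'f set" where
  "SU U = {f \<in> Fc. odd (card {w \<in> U. f \<in> bd w})}"

lemma SU_insert:
  assumes "w \<notin> U" "finite U" "w \<in> W"
  shows "SU (insert w U) = sdiff (SU U) (bd w)"
proof (rule set_eqI)
  fix f
  show "f \<in> SU (insert w U) \<longleftrightarrow> f \<in> sdiff (SU U) (bd w)"
  proof (cases "f \<in> bd w")
    case True
    then have "{x \<in> insert w U. f \<in> bd x} = insert w {x \<in> U. f \<in> bd x}" by auto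
    moreover have "card (insert w {x \<in> U. f \<in> bd x}) = Suc (card {x \<in> U. f \<in> bd x})"
      using assms by simp
    moreover have "f \<in> Fc" using True bd_sub[OF assms(3)] by blast
    ultimately show ?thesis using True by (simp add: SU_def sdiff_def)
  next
    case False
    then have "{x \<in> insert w U. f \<in> bd x} = {x \<in> U. f \<in> bd x}" by auto
    then show ?thesis using False by (simp add: SU_def sdiff_def)
  qed
qed

lemma SU_closed:
  assumes "finite U" "U \<subseteq> W" "e \<in> Ed"
  shows "even (card (SU U \<inter> II e))"
  using assms(1,2)
proof (induction U rule: finite_induct)
  case empty
  have "SU {} = {}" by (simp add: SU_def)
  then show ?case by simp
next
  case (insert w U)
  have w: "w \<in> W" "U \<subseteq> W" using insert.prems by auto
  have f1: "finite (SU U)" using finite_subset[OF _ finFc] by (auto simp: SU_def)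
  have f2: "finite (bd w)" using finite_subset[OF bd_sub[OF w(1)] finFc] .
  show ?case unfolding SU_insert[OF insert.hyps(2) insert.hyps(1) w(1)] par_sdiff2[OF f1 f2]
    using insert.IH[OF w(2)] bd_closed[OF w(1) assms(3)] by simp
qed

lemma SU_mem:
  assumes U: "U \<subseteq> W" "finite U" and f: "f \<in> SU U"
  shows "\<exists>a \<in> U. \<exists>b \<in> W. b \<notin> U \<and> f \<in> bd a \<and> f \<in> bd b"
proof -
  have odd: "odd (card {w \<in> U. f \<in> bd w})" using f by (simp add: SU_def)
  then have "{w \<in> U. f \<in> bd w} \<noteq> {}" by (metis card.empty even_zero)
  then obtain a where a: "a \<in> U" "f \<in> bd a" by blast
  have aW: "a \<in> W" using a U by blast
  obtain b where b: "b \<in> W" "b \<noteq> a" "f \<in> bd b" using two[OF aW a(2)] by blast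
  have "b \<notin> U"
  proof
    assume bU: "b \<in> U"
    have "{w \<in> U. f \<in> bd w} = {a, b}"
    proof
      show "{w \<in> U. f \<in> bd w} \<subseteq> {a, b}"
      proof
        fix w assume "w \<in> {w \<in> U. f \<in> bd w}"
        then have "w \<in> W" "f \<in> bd w" using U by auto
        then show "w \<in> {a, b}" using excl[OF aW b(1) _ b(2)[symmetric] a(2) b(3)] by blast
      qed
      show "{a, b} \<subseteq> {w \<in> U. f \<in> bd w}" using a b bU by auto
    qed
    then show False using odd b(2) by simp
  qed
  then show ?thesis using a b by blast
qed

lemma SU_intro:
  assumes U: "U \<subseteq> W" and a: "a \<in> U" and b: "b \<in> W" "b \<notin> U" and f: "f \<in> bd a" "f \<in> bd b"
  shows "f \<in> SU U"
proof -
  have aW: "a \<in> W" using a U by blast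
  have ab: "a \<noteq> b" using a b by blast
  have "{w \<in> U. f \<in> bd w} = {a}"
  proof
    show "{w \<in> U. f \<in> bd w} \<subseteq> {a}"
    proof
      fix w assume "w \<in> {w \<in> U. f \<in> bd w}"
      then have "w \<in> W" "f \<in> bd w" "w \<in> U" using U by auto
      then show "w \<in> {a}" using excl[OF aW b(1) _ ab f] b(2) by blast
    qed
    show "{a} \<subseteq> {w \<in> U. f \<in> bd w}" using a f by auto
  qed
  moreover have "f \<in> Fc" using bd_sub[OF aW] f by blast
  ultimately show ?thesis by (simp add: SU_def)
qed

lemma aug_conn:
  assumes "a \<in> W" "b \<in> W"
  shows "(a, b) \<in> {(a, b). a \<in> W \<and> b \<in> W \<and> bd a \<inter> bd b \<noteq> {}}\<^sup>*"
proof -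
  let ?A = "{(a, b). a \<in> W \<and> b \<in> W \<and> bd a \<inter> bd b \<noteq> {}}"
  have real: "\<And>x y. x \<in> Vol \<Longrightarrow> y \<in> Vol \<Longrightarrow> (Inl x, Inl y) \<in> ?A\<^sup>*"
  proof -
    fix x y assume x: "x \<in> Vol" and y: "y \<in> Vol"
    have "(x, y) \<in> {(a, b). a \<in> Vol \<and> b \<in> Vol \<and> fbd a \<inter> fbd b \<noteq> {}}\<^sup>*" using conn[OF x y] .
    then show "(Inl x, Inl y) \<in> ?A\<^sup>*"
    proof (induction rule: rtrancl_induct)
      case base then show ?case by simp
    next
      case (step y z)
      then have "(Inl y, Inl z) \<in> ?A" by simp
      then show ?case using step.IH by (rule rtrancl_into_rtrancl[rotated])
    qed
  qed
  have toreal: "\<And>w. w \<in> W \<Longrightarrow> \<exists>x \<in> Vol. (w, Inl x) \<in> ?A\<^sup>* \<and> (Inl x, w) \<in> ?A\<^sup>*"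
  proof -
    fix w assume w: "w \<in> W"
    show "\<exists>x \<in> Vol. (w, Inl x) \<in> ?A\<^sup>* \<and> (Inl x, w) \<in> ?A\<^sup>*"
    proof (cases w)
      case (Inl x) then show ?thesis using w by auto
    next
      case (Inr C)
      then have C: "C \<in> classes" using w by simp
      obtain g where g: "g \<in> C" using class_ne[OF C] by blast
      then have "g \<in> bdry" using class_sub[OF C] by blast
      then obtain x where "vols g = {x}" using bdry_vol by blast
      then have x: "x \<in> Vol" "g \<in> fbd x" by (auto simp: mem_vols)
      have "(w, Inl x) \<in> ?A" "(Inl x, w) \<in> ?A" using Inr C x g by auto
      then show ?thesis using x(1) by blast
    qed
  qed
  obtain x where x: "x \<in> Vol" "(a, Inl x) \<in> ?A\<^sup>*" using toreal[OF assms(1)] by blast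
  obtain y where y: "y \<in> Vol" "(Inl y, b) \<in> ?A\<^sup>*" using toreal[OF assms(2)] by blast
  have "(Inl x, Inl y) \<in> ?A\<^sup>*" using real[OF x(1) y(1)] .
  then show ?thesis using x(2) y(2) by (meson rtrancl_trans)
qed

lemma rhs_of_closed:
  assumes "S \<noteq> {}" "S \<subseteq> E" "S \<subseteq> Fc" "\<forall>e \<in> Ed. even (card (S \<inter> II e))"
  shows "\<exists>S. S \<noteq> {} \<and> S \<subseteq> E \<and> ((S, {}) \<in> stab \<or> tc_logical Ed Fc Vol ebd fbd (S, {}))"
proof (cases "(S, {}) \<in> stab")
  case True then show ?thesis using assms by blast
next
  case False
  have "\<forall>s \<in> stab. commutes (S, {}) s"
    using closed_orth[OF assms(3,4)] by (simp add: commutes_def)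
  then have "tc_logical Ed Fc Vol ebd fbd (S, {})"
    using False assms(3) by (simp add: tc_logical_def)
  then show ?thesis using assms by blast
qed

lemma dir1:
  assumes cut: "cut_set Fc W bd E"
  shows "\<exists>S. S \<noteq> {} \<and> S \<subseteq> E \<and> ((S, {}) \<in> stab \<or> tc_logical Ed Fc Vol ebd fbd (S, {}))"
proof -
  obtain v v' where v: "v \<in> W" "v' \<in> W" and H: "\<forall>fs vs. face_path Fc W bd fs vs \<and> hd fs \<in> bd v \<and>
      last fs \<in> bd v' \<and> v \<notin> set vs \<and> v' \<notin> set vs \<longrightarrow> E \<inter> set fs \<noteq> {}"
    using cut unfolding cut_set_def by (elim bexE) (rule that; assumption)
  show ?thesis
  proof (cases "v = v'")
    case True
    have sE: "bd v \<subseteq> E"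
    proof
      fix g assume g: "g \<in> bd v"
      have fp: "face_path Fc W bd [g] []" using g bd_sub[OF v(1)] by (auto simp: face_path_def)
      have "E \<inter> set [g] \<noteq> {}"
      proof (rule H[rule_format])
        show "face_path Fc W bd [g] [] \<and> hd [g] \<in> bd v \<and> last [g] \<in> bd v' \<and> v \<notin> set [] \<and> v' \<notin> set []"
          using fp g True by simp
      qed
      then show "g \<in> E" by simp
    qed
    have cl: "\<forall>e \<in> Ed. even (card (bd v \<inter> II e))" using bd_closed[OF v(1)] by blast
    show ?thesis by (rule rhs_of_closed[OF bd_ne[OF v(1)] sE bd_sub[OF v(1)] cl])
  next
    case False
    define R where "R = {f. \<exists>fs vs. face_path Fc W bd fs vs \<and> hd fs \<in> bd v \<and> last fs = f \<and>
        v \<notin> set vs \<and> v' \<notin> set vs \<and> E \<inter> set fs = {}}"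
    have Rbase: "\<And>f. f \<in> bd v \<Longrightarrow> f \<notin> E \<Longrightarrow> f \<in> R"
    proof -
      fix f assume f: "f \<in> bd v" "f \<notin> E"
      have "face_path Fc W bd [f] []" using f bd_sub[OF v(1)] by (auto simp: face_path_def)
      then show "f \<in> R" unfolding R_def using f
        by (intro CollectI exI[of _ "[f]"] exI[of _ "[]"]) auto
    qed
    have Rstep: "\<And>g w f. g \<in> R \<Longrightarrow> w \<in> W \<Longrightarrow> w \<noteq> v \<Longrightarrow> w \<noteq> v' \<Longrightarrow> g \<in> bd w \<Longrightarrow> f \<in> bd w \<Longrightarrow> f \<notin> E \<Longrightarrow> f \<in> R"
    proof -
      fix g w f assume g: "g \<in> R" and w: "w \<in> W" "w \<noteq> v" "w \<noteq> v'" "g \<in> bd w" "f \<in> bd w" "f \<notin> E"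
      obtain fs vs where fs: "face_path Fc W bd fs vs" "hd fs \<in> bd v" "last fs = g"
        "v \<notin> set vs" "v' \<notin> set vs" "E \<inter> set fs = {}"
        using g unfolding R_def mem_Collect_eq by (elim exE conjE) (rule that; assumption)
      have fF: "f \<in> Fc" using bd_sub[OF w(1)] w(5) by blast
      obtain fs' vs' where fs': "face_path Fc W bd fs' vs'" "hd fs' = hd fs" "last fs' = f"
        "set fs' \<subseteq> insert f (set fs)" "set vs' \<subseteq> insert w (set vs)"
        using fp_extend[OF fs(1) w(1) _ w(5) fF] fs(3) w(4) by (auto elim!: exE conjE)
      have "v \<notin> set vs'" "v' \<notin> set vs'" using fs'(5) fs(4,5) w(2,3) by auto
      moreover have "E \<inter> set fs' = {}" using fs'(4) fs(6) w(6) by blast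
      ultimately show "f \<in> R" unfolding R_def mem_Collect_eq
        by (intro exI[of _ fs'] exI[of _ vs'] conjI) (use fs'(1,2,3) fs(2) in simp_all)
    qed
    have Rcut: "\<And>g. g \<in> R \<Longrightarrow> g \<notin> bd v'"
    proof
      fix g assume g: "g \<in> R" "g \<in> bd v'"
      obtain fs vs where fs: "face_path Fc W bd fs vs" "hd fs \<in> bd v" "last fs = g"
        "v \<notin> set vs" "v' \<notin> set vs" "E \<inter> set fs = {}"
        using g(1) unfolding R_def mem_Collect_eq by (elim exE conjE) (rule that; assumption)
      have "E \<inter> set fs \<noteq> {}"
        by (rule H[rule_format]) (use fs g(2) in simp)
      then show False using fs(6) by simp
    qed
    define U where "U = insert v {w \<in> W. w \<noteq> v' \<and> bd w \<inter> R \<noteq> {}}"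
    have UW: "U \<subseteq> W" using v unfolding U_def by auto
    have finU: "finite U" using finite_subset[OF UW finW] .
    have v'U: "v' \<notin> U" using False unfolding U_def by auto
    have vU: "v \<in> U" unfolding U_def by simp
    define S where "S = SU U"
    have SF: "S \<subseteq> Fc" unfolding S_def SU_def by auto
    have Scl: "\<forall>e \<in> Ed. even (card (S \<inter> II e))" using SU_closed[OF finU UW] unfolding S_def by blast
    have SE: "S \<subseteq> E"
    proof
      fix f assume f: "f \<in> S"
      obtain a b where ab: "a \<in> U" "b \<in> W" "b \<notin> U" "f \<in> bd a" "f \<in> bd b"
        using SU_mem[OF UW finU] f unfolding S_def by blast
      show "f \<in> E"
      proof (rule ccontr)
        assume fE: "f \<notin> E"
        have fR: "f \<in> R"
        proof (cases "a = v")
          case True then show ?thesis using Rbase ab(4) fE by simp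
        next
          case False
          then have "a \<in> W" "a \<noteq> v'" "bd a \<inter> R \<noteq> {}" using ab(1) unfolding U_def by auto
          then obtain g where "g \<in> bd a" "g \<in> R" by blast
          then show ?thesis using Rstep[of g a f] \<open>a \<in> W\<close> False \<open>a \<noteq> v'\<close> ab(4) fE by blast
        qed
        show False
        proof (cases "b = v'")
          case True then show False using Rcut[OF fR] ab(5) by simp
        next
          case False
          have "b \<noteq> v" using ab(3) vU by blast
          then have "b \<in> U" unfolding U_def using ab(2,5) fR False by blast
          then show False using ab(3) by simp
        qed
      qed
    qed
    have Sne: "S \<noteq> {}"
    proof -
      obtain a b where ab: "(a, b) \<in> {(a, b). a \<in> W \<and> b \<in> W \<and> bd a \<inter> bd b \<noteq> {}}" "a \<in> U" "b \<notin> U"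
        using rtrancl_cross[OF aug_conn[OF v] vU v'U] by blast
      then obtain g where "g \<in> bd a" "g \<in> bd b" "b \<in> W" by blast
      then have "g \<in> S" using SU_intro[OF UW ab(2) _ ab(3)] unfolding S_def by blast
      then show ?thesis by blast
    qed
    show ?thesis using rhs_of_closed[OF Sne SE SF Scl] .
  qed
qed

lemma dir2:
  assumes "\<exists>S. S \<noteq> {} \<and> S \<subseteq> E \<and> ((S, {}) \<in> stab \<or> tc_logical Ed Fc Vol ebd fbd (S, {}))"
  shows "cut_set Fc W bd E"
proof -
  obtain S where S: "S \<noteq> {}" "S \<subseteq> E" "(S, {}) \<in> stab \<or> tc_logical Ed Fc Vol ebd fbd (S, {})"
    using assms by blast
  from S(3) show ?thesis
  proof
    assume st: "(S, {}) \<in> stab"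
    have SF: "S \<subseteq> Fc" using stab_sub[OF st] by simp
    have "\<forall>e \<in> Ed. even (card (S \<inter> II e))"
      using stabX_closed[OF st] by (simp add: Int_commute)
    then have "\<forall>p \<in> stab. even (card (S \<inter> snd p))" using closed_orth[OF SF] by blast
    then show ?thesis using cut_from_S[OF S(1,2) SF] by blast
  next
    assume lg: "tc_logical Ed Fc Vol ebd fbd (S, {})"
    then have SF: "S \<subseteq> Fc" by (simp add: tc_logical_def)
    have "\<forall>p \<in> stab. even (card (S \<inter> snd p))"
      using lg by (simp add: tc_logical_def commutes_def)
    then show ?thesis using cut_from_S[OF S(1,2) SF] by blast
  qed
qed

end

theorem lemma6:
  fixes Vt :: "'x set" and Ed :: "'e set" and Fc :: "'f set" and Vol :: "'v set"
    and ends :: "'e \<Rightarrow> 'x set" and ebd :: "'f \<Rightarrow> 'e set" and fbd :: "'v \<Rightarrow> 'f set"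
    and \<E> :: "'f set"
  assumes "lattice Vt Ed Fc Vol ends ebd fbd"
    and "\<E> \<subseteq> Fc"
  shows "cut_set Fc (aug_vols Ed Fc Vol ebd fbd) (aug_bd fbd) \<E> \<longleftrightarrow>
         (\<exists>S. S \<noteq> {} \<and> S \<subseteq> \<E> \<and>
              ((S, {}) \<in> tc_stab Ed Fc Vol ebd fbd \<or> tc_logical Ed Fc Vol ebd fbd (S, {})))"
proof -
  interpret L: Lat Vt Ed Fc Vol ends ebd fbd using assms(1) by unfold_locales
  show ?thesis using L.dir1 L.dir2 by blast
qed

end
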